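(* Let $H\subseteq G$ be finite groups such that the interval $[H,G]$ of the subgroup lattice of $G$ is top Boolean. Then $[H,G]$ is $H$-cyclic, i.e. there exists $g\in G$ such that $\langle H,g\rangle=G$.
   Context: The interval $[H,G]$ is the lattice of subgroups $K$ with $H\subseteq K\subseteq G$, ordered by inclusion, with $K_1\vee K_2=\langle K_1,K_2\rangle$ and $K_1\wedge K_2=K_1\cap K_2$. Coatoms of a finite lattice are the maximal elements of $L\setminus\{\hat 1\}$; if $t$ is the meet of all coatoms, the top interval of $L$ is $[t,\hat 1]$. A finite lattice is top Boolean if its top interval is a Boolean lattice (distributive, bounded, every element has a unique complement). An interval $[H,G]$ is $H$-cyclic if there exists $g\in G$ with $\langle Hg\rangle=\langle H,g\rangle=G$. *)

theory Defs
  imports "HOL-Algebra.Algebra"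
begin

definition subgroup_interval :: "('a, 'b) monoid_scheme \<Rightarrow> 'a set \<Rightarrow> 'a set set" where
  "subgroup_interval G H = {K. subgroup K G \<and> H \<subseteq> K}"

definition subgroup_join :: "('a, 'b) monoid_scheme \<Rightarrow> 'a set \<Rightarrow> 'a set \<Rightarrow> 'a set" where
  "subgroup_join G K1 K2 = generate G (K1 \<union> K2)"

definition interval_coatoms :: "('a, 'b) monoid_scheme \<Rightarrow> 'a set \<Rightarrow> 'a set set" where
  "interval_coatoms G H = {K \<in> subgroup_interval G H. K \<noteq> carrier G \<and>
      (\<forall>K' \<in> subgroup_interval G H. K \<subseteq> K' \<and> K' \<noteq> carrier G \<longrightarrow> K' = K)}"

text \<open>Meet of all coatoms (the empty meet being the top element G).\<close>
definition coatom_meet :: "('a, 'b) monoid_scheme \<Rightarrow> 'a set \<Rightarrow> 'a set" where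
  "coatom_meet G H = carrier G \<inter> \<Inter> (interval_coatoms G H)"

definition boolean_lattice_on ::
  "'c set \<Rightarrow> ('c \<Rightarrow> 'c \<Rightarrow> 'c) \<Rightarrow> ('c \<Rightarrow> 'c \<Rightarrow> 'c) \<Rightarrow> 'c \<Rightarrow> 'c \<Rightarrow> bool" where
  "boolean_lattice_on L jn mt bt tp \<longleftrightarrow>
     (\<forall>x\<in>L. \<forall>y\<in>L. \<forall>z\<in>L. mt x (jn y z) = jn (mt x y) (mt x z)) \<and>
     (\<forall>x\<in>L. \<forall>y\<in>L. \<forall>z\<in>L. jn x (mt y z) = mt (jn x y) (jn x z)) \<and>
     (\<forall>x\<in>L. \<exists>!y. y \<in> L \<and> jn x y = tp \<and> mt x y = bt)"

text \<open>[H,G] is top Boolean: its top interval [t,G], t the meet of the coatoms,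
  is a Boolean lattice (with join = generated subgroup, meet = intersection).\<close>
definition top_boolean :: "('a, 'b) monoid_scheme \<Rightarrow> 'a set \<Rightarrow> bool" where
  "top_boolean G H \<longleftrightarrow>
     boolean_lattice_on (subgroup_interval G (coatom_meet G H))
       (subgroup_join G) (\<inter>) (coatom_meet G H) (carrier G)"

end

theory Submission
  imports Defs
begin

lemma gen_sub_eq:
  assumes "group G" "subgroup M G" shows "generate G M = M"
  using group.generate_subgroup_incl[OF assms(1) order_refl assms(2)]
        generate.incl[of _ M G] by blast

theorem theorem3p2:
  fixes G :: "('a, 'b) monoid_scheme" and H :: "'a set"
  assumes "group G" and "finite (carrier G)" and "subgroup H G"
    and "top_boolean G H"
  shows "\<exists>g \<in> carrier G. generate G (H \<union> {g}) = carrier G"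
proof -
  interpret group G by fact
  define C where "C = interval_coatoms G H"
  define t where "t = coatom_meet G H"
  define A where "A S = carrier G \<inter> \<Inter> S" for S :: "'a set set"
  have Csub: "subgroup M G" "H \<subseteq> M" "M \<noteq> carrier G" if "M \<in> C" for M
    using that unfolding C_def interval_coatoms_def subgroup_interval_def by auto
  have Cmax: "K = M" if "M \<in> C" "subgroup K G" "M \<subseteq> K" "K \<noteq> carrier G" for M K
    using that Csub[OF that(1)] unfolding C_def interval_coatoms_def subgroup_interval_def by blast
  have finC: "finite C"
  proof -
    have "C \<subseteq> Pow (carrier G)" using Csub subgroup.subset by blast
    thus ?thesis using assms(2) finite_subset by blast
  qed
  have tA: "t \<subseteq> A S" if "S \<subseteq> C" for S
    using that unfolding t_def A_def coatom_meet_def C_def by blast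
  have Asub: "subgroup (A S) G" if "S \<subseteq> C" for S
  proof -
    have "A S = \<Inter> (insert (carrier G) S)" unfolding A_def by auto
    moreover have "subgroup (\<Inter> (insert (carrier G) S)) G"
      by (rule subgroups_Inter) (use that Csub subgroup_self in auto)
    ultimately show ?thesis by simp
  qed
  have L_A: "A S \<in> subgroup_interval G t" if "S \<subseteq> C" for S
    using tA[OF that] Asub[OF that] unfolding subgroup_interval_def by auto
  have L_C: "M \<in> subgroup_interval G t" if "M \<in> C" for M
  proof -
    have "A {M} = M" using Csub(1)[OF that] subgroup.subset unfolding A_def by auto
    thus ?thesis using L_A[of "{M}"] that by simp
  qed
  have distr: "\<forall>x\<in>subgroup_interval G t. \<forall>y\<in>subgroup_interval G t. \<forall>z\<in>subgroup_interval G t.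
      subgroup_join G x (y \<inter> z) = subgroup_join G x y \<inter> subgroup_join G x z"
    using assms(4) unfolding top_boolean_def boolean_lattice_on_def t_def by blast
  have joinMN: "generate G (M \<union> N) = carrier G" if "M \<in> C" "N \<in> C" "M \<noteq> N" for M N
  proof (rule ccontr)
    assume ne: "generate G (M \<union> N) \<noteq> carrier G"
    have sg: "subgroup (generate G (M \<union> N)) G"
      by (rule generate_is_subgroup) (use Csub[OF that(1)] Csub[OF that(2)] subgroup.subset in blast)
    have "M \<subseteq> generate G (M \<union> N)" using generate.incl[of _ "M \<union> N" G] by blast
    hence "generate G (M \<union> N) = M"
      using Cmax[OF that(1) sg _ ne] by blast
    hence "N \<subseteq> M" using generate.incl[of _ "M \<union> N" G] by blast
    hence "M = N" using Cmax[OF that(2) Csub(1)[OF that(1)]] Csub[OF that(1)] by blast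
    thus False using that by simp
  qed
  have joinA: "generate G (M \<union> A S) = carrier G" if "finite S" "S \<subseteq> C" "M \<in> C" "M \<notin> S" for M S
    using that
  proof (induction S rule: finite_induct)
    case empty
    have "M \<union> A {} = carrier G" using Csub[OF empty(2)] subgroup.subset unfolding A_def by blast
    then show ?case using gen_sub_eq[OF assms(1) subgroup_self] by simp
  next
    case (insert N S)
    have AI: "A (insert N S) = N \<inter> A S" using Csub[OF insert.prems(1)[THEN subsetD, OF insertI1]]
      unfolding A_def by auto
    have "generate G (M \<union> (N \<inter> A S)) = generate G (M \<union> N) \<inter> generate G (M \<union> A S)"
      using distr L_C[OF insert.prems(2)] L_C[of N] L_A[of S] insert.prems
      unfolding subgroup_join_def by auto
    also have "\<dots> = carrier G" using joinMN[of M N] insert by auto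
    finally show ?case using AI by simp
  qed
  have avoid: "\<exists>g\<in>carrier G. \<forall>M\<in>S. g \<notin> M" if "finite S" "S \<subseteq> C" for S
    using that
  proof (induction S rule: finite_induct)
    case empty
    then show ?case by blast
  next
    case (insert N S)
    then obtain g where g: "g \<in> carrier G" "\<forall>M\<in>S. g \<notin> M" by auto
    have NC: "N \<in> C" using insert by auto
    show ?case
    proof (cases "g \<in> N")
      case False
      then show ?thesis using g by blast
    next
      case True
      have "\<not> A S \<subseteq> N"
      proof
        assume "A S \<subseteq> N"
        hence "N \<union> A S = N" by blast
        hence "generate G (N \<union> A S) = N" using gen_sub_eq[OF assms(1) Csub(1)[OF NC]] by simp
        thus False using joinA[of S N] insert Csub(3)[OF NC] by auto
      qed
      then obtain a where a: "a \<in> A S" "a \<notin> N" by blast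
      have ac: "a \<in> carrier G" using a unfolding A_def by auto
      have "\<forall>M\<in>insert N S. g \<otimes>\<^bsub>G\<^esub> a \<notin> M"
      proof
        fix M assume M: "M \<in> insert N S"
        have sM: "subgroup M G" using M insert Csub by blast
        show "g \<otimes>\<^bsub>G\<^esub> a \<notin> M"
        proof
          assume ga: "g \<otimes>\<^bsub>G\<^esub> a \<in> M"
          show False
          proof (cases "M = N")
            case True
            have "inv\<^bsub>G\<^esub> g \<otimes>\<^bsub>G\<^esub> (g \<otimes>\<^bsub>G\<^esub> a) \<in> M"
              using ga \<open>g \<in> N\<close> True sM subgroup.m_closed subgroup.m_inv_closed by fastforce
            hence "a \<in> M" using g(1) ac by (simp add: m_assoc[symmetric])
            then show False using a True by simp
          next
            case False
            hence MS: "M \<in> S" using M by simp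
            hence "a \<in> M" using a unfolding A_def by auto
            hence "(g \<otimes>\<^bsub>G\<^esub> a) \<otimes>\<^bsub>G\<^esub> inv\<^bsub>G\<^esub> a \<in> M" using ga sM subgroup.m_closed subgroup.m_inv_closed by fastforce
            hence "g \<in> M" using g(1) ac by (simp add: m_assoc)
            then show False using g MS by blast
          qed
        qed
      qed
      then show ?thesis using g(1) ac by blast
    qed
  qed
  obtain g where g: "g \<in> carrier G" "\<forall>M\<in>C. g \<notin> M" using avoid[OF finC order_refl] by blast
  define K where "K = generate G (H \<union> {g})"
  have sK: "subgroup K G" unfolding K_def
    by (rule generate_is_subgroup) (use g assms(3) subgroup.subset in blast)
  have HK: "H \<union> {g} \<subseteq> K" unfolding K_def using generate.incl[of _ "H \<union> {g}" G] by blast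
  have "K = carrier G"
  proof (rule ccontr)
    assume ne: "K \<noteq> carrier G"
    define P where "P = {K'. subgroup K' G \<and> K \<subseteq> K' \<and> K' \<noteq> carrier G}"
    have "finite P"
    proof -
      have "P \<subseteq> Pow (carrier G)" unfolding P_def using subgroup.subset by blast
      thus ?thesis using assms(2) finite_subset by blast
    qed
    moreover have "K \<in> P" unfolding P_def using sK ne by blast
    ultimately obtain M where M: "M \<in> P" "\<forall>b\<in>P. M \<subseteq> b \<longrightarrow> M = b"
      using finite_has_maximal by blast
    have M1: "subgroup M G" "K \<subseteq> M" "M \<noteq> carrier G" using M(1) unfolding P_def by auto
    have HM: "H \<subseteq> M" using M1(2) HK by blast
    have "\<forall>K'\<in>subgroup_interval G H. M \<subseteq> K' \<and> K' \<noteq> carrier G \<longrightarrow> K' = M"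
    proof (intro ballI impI)
      fix K' assume "K' \<in> subgroup_interval G H" "M \<subseteq> K' \<and> K' \<noteq> carrier G"
      hence "K' \<in> P" using M1 unfolding P_def subgroup_interval_def by auto
      thus "K' = M" using M(2) \<open>M \<subseteq> K' \<and> K' \<noteq> carrier G\<close> by auto
    qed
    hence "M \<in> C" unfolding C_def interval_coatoms_def subgroup_interval_def
      using M1 HM by auto
    moreover have "g \<in> M" using M1 HK by blast
    ultimately show False using g by blast
  qed
  thus ?thesis using g K_def by blast
qed

end
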